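(* Let $(x(t),y(t))$ be any solution of the system (FHN-CNN) and set $V_i=x_i-x_{i-1}$, $W_i=y_i-y_{i-1}$ for $1\le i\le n$ (with $x_0=x_n$, $y_0=y_n$). Then for all $t>0$, $$\frac{d}{dt}\sum_{i=1}^n\big(|V_i|^2+|W_i|^2\big)+2\delta\sum_{i=1}^n\big(|V_i|^2+|W_i|^2\big)+4p(x_n-x_1)^2\le 2\sum_{i=1}^n\Big[(\delta+\gamma)|V_i|^2+|c-b|\big(|V_i|^2+|W_i|^2\big)\Big]+2p(x_{n-1}-x_2)^2.$$
   Context: Fix an integer $n\ge 4$ and positive constants $a,b,c,\delta,p$. Let $f\in C^1(\mathbb{R},\mathbb{R})$ satisfy, for some positive constants $\lambda,\beta,\gamma$: $f(s)s\le -\lambda s^4+\beta$ and $f'(s)\le\gamma$ for all $s\in\mathbb{R}$. The FitzHugh–Nagumo cellular neural network with boundary feedback (FHN-CNN) is the ODE system for $t>0$, $1\le i\le n$: $$\frac{dx_i}{dt}=a(x_{i-1}-2x_i+x_{i+1})+f(x_i)-by_i+pu_i,\qquad \frac{dy_i}{dt}=cx_i-\delta y_i,$$ with the periodic convention $x_0=x_n$, $x_{n+1}=x_1$, and the boundary feedback $u_1=u_{n+1}=x_n-x_1$, $u_i=0$ for $2\le i\le n-1$, $u_n=u_0=x_1-x_n$. *)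

theory Defs
  imports "HOL-Analysis.Analysis"
begin

text \<open>States are functions z :: nat => real, meaningful on indices 1..n.
  Periodic convention: z_0 = z_n, z_(n+1) = z_1.\<close>
definition per :: "nat \<Rightarrow> (nat \<Rightarrow> real) \<Rightarrow> nat \<Rightarrow> real" where
  "per n z i = (if i = 0 then z n else if i = n + 1 then z 1 else z i)"

definition fb :: "nat \<Rightarrow> (nat \<Rightarrow> real) \<Rightarrow> nat \<Rightarrow> real" where
  "fb n z i = (if i = 1 \<or> i = n + 1 then z n - z 1
               else if i = n \<or> i = 0 then z 1 - z n else 0)"

definition FHN_solution ::
  "nat \<Rightarrow> real \<Rightarrow> real \<Rightarrow> real \<Rightarrow> real \<Rightarrow> real \<Rightarrow> (real \<Rightarrow> real)
   \<Rightarrow> (real \<Rightarrow> nat \<Rightarrow> real) \<Rightarrow> (real \<Rightarrow> nat \<Rightarrow> real) \<Rightarrow> bool" where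
  "FHN_solution n a b c \<delta> p f x y \<longleftrightarrow>
     (\<forall>t>0. \<forall>i\<in>{1..n}.
        ((\<lambda>s. x s i) has_real_derivative
           (a * (per n (x t) (i - 1) - 2 * x t i + per n (x t) (i + 1))
            + f (x t i) - b * y t i + p * fb n (x t) i)) (at t)
      \<and> ((\<lambda>s. y s i) has_real_derivative (c * x t i - \<delta> * y t i)) (at t))"

end

theory Submission imports Defs begin

lemma final_alg:
  fixes a SL SF SC A B C U X Y \<gamma> \<delta> k p :: real
  assumes "a*SL \<le> 0" "SF \<le> \<gamma>*A" "SC \<le> k*C" "2*p*U + 4*p*X \<le> 2*p*Y" "C = A + B"
  shows "2*a*SL + 2*SF + 2*SC - 2*\<delta>*B + 2*p*U + 2*\<delta>*C + 4*p*X \<le> 2*((\<delta>+\<gamma>)*A + k*C) + 2*p*Y"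
proof -
  have "2*\<delta>*C = 2*\<delta>*A + 2*\<delta>*B" using assms(5) by (simp add: algebra_simps)
  moreover have "2*((\<delta>+\<gamma>)*A + k*C) = 2*\<delta>*A + 2*(\<gamma>*A) + 2*(k*C)" by (simp add: algebra_simps)
  moreover have "2*a*SL = 2*(a*SL)" by simp
  ultimately show ?thesis using assms(1-4) by linarith
qed

lemma young_aux: "(u::real)*w - u^2 \<le> w^2"
proof -
  have "0 \<le> (2*u - w)^2 + 3 * w^2" by simp
  moreover have "(2*u - w)^2 + 3 * w^2 = 4 * (w^2 - (u*w - u^2))" by (simp add: power2_eq_square algebra_simps)
  ultimately show ?thesis by simp
qed

lemma f_lip:
  fixes f f' :: "real \<Rightarrow> real"
  assumes d: "\<And>s. (f has_real_derivative f' s) (at s)" and g: "\<And>s. f' s \<le> \<gamma>"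
  shows "(u - v) * (f u - f v) \<le> \<gamma> * (u - v)^2"
proof -
  have mono: "\<gamma> * a - f a \<le> \<gamma> * b - f b" if "a \<le> b" for a b
  proof (rule DERIV_nonneg_imp_nondecreasing[OF that])
    fix z show "\<exists>y. ((\<lambda>s. \<gamma> * s - f s) has_real_derivative y) (at z) \<and> y \<ge> 0"
      by (intro exI[of _ "\<gamma> - f' z"] conjI derivative_eq_intros d g) (auto simp: g d)
  qed
  show ?thesis
  proof (cases "v \<le> u")
    case True
    from mono[OF this] have "f u - f v \<le> \<gamma> * (u - v)" by (simp add: algebra_simps)
    from mult_left_mono[OF this, of "u - v"] True show ?thesis by (simp add: power2_eq_square algebra_simps)
  next
    case False
    from mono[of u v] False have "f v - f u \<le> \<gamma> * (v - u)" by (simp add: algebra_simps)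
    from mult_left_mono[OF this, of "v - u"] False show ?thesis by (simp add: power2_eq_square algebra_simps)
  qed
qed

theorem mainTheorem4:
  fixes n :: nat and a b c \<delta> p lam \<beta> \<gamma> :: real
    and f f' :: "real \<Rightarrow> real" and x y :: "real \<Rightarrow> nat \<Rightarrow> real"
  assumes "n \<ge> 4"
    and "a > 0" "b > 0" "c > 0" "\<delta> > 0" "p > 0"
    and "lam > 0" "\<beta> > 0" "\<gamma> > 0"
    and "\<And>s. (f has_real_derivative f' s) (at s)"
    and "continuous_on UNIV f'"
    and "\<And>s. f s * s \<le> - lam * s ^ 4 + \<beta>"
    and "\<And>s. f' s \<le> \<gamma>"
    and "FHN_solution n a b c \<delta> p f x y"
    and "t > 0"
  shows "(\<lambda>s. \<Sum>i=1..n. \<bar>x s i - per n (x s) (i - 1)\<bar>^2 + \<bar>y s i - per n (y s) (i - 1)\<bar>^2)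
           differentiable (at t)
       \<and> deriv (\<lambda>s. \<Sum>i=1..n. \<bar>x s i - per n (x s) (i - 1)\<bar>^2 + \<bar>y s i - per n (y s) (i - 1)\<bar>^2) t
         + 2 * \<delta> * (\<Sum>i=1..n. \<bar>x t i - per n (x t) (i - 1)\<bar>^2 + \<bar>y t i - per n (y t) (i - 1)\<bar>^2)
         + 4 * p * (x t n - x t 1)^2
       \<le> 2 * (\<Sum>i=1..n. (\<delta> + \<gamma>) * \<bar>x t i - per n (x t) (i - 1)\<bar>^2
                 + \<bar>c - b\<bar> * (\<bar>x t i - per n (x t) (i - 1)\<bar>^2 + \<bar>y t i - per n (y t) (i - 1)\<bar>^2))
         + 2 * p * (x t (n - 1) - x t 2)^2"
proof -
  note n4 = assms(1)
  define q where "q i = (if i = 1 then n else i - 1)" for i :: nat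
  define sc where "sc i = (if i = n then 1 else i + 1)" for i :: nat
  have qin: "q i \<in> {1..n}" if "i \<in> {1..n}" for i using that n4 by (auto simp: q_def)
  have sin: "sc i \<in> {1..n}" if "i \<in> {1..n}" for i using that n4 by (auto simp: sc_def)
  have sq: "sc (q i) = i" if "i \<in> {1..n}" for i using that n4 by (auto simp: q_def sc_def)
  have qs: "q (sc i) = i" if "i \<in> {1..n}" for i using that n4 by (auto simp: q_def sc_def)
  have perm1: "per n z (i - 1) = z (q i)" if "i \<in> {1..n}" for z i
    using that n4 by (auto simp: per_def q_def)
  have perp1: "per n z (i + 1) = z (sc i)" if "i \<in> {1..n}" for z i
    using that n4 by (auto simp: per_def sc_def)
  have bq: "bij_betw q {1..n} {1..n}"
    by (rule bij_betw_byWitness[where f'=sc]) (use sq qs qin sin in auto)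
  have bs: "bij_betw sc {1..n} {1..n}"
    by (rule bij_betw_byWitness[where f'=q]) (use sq qs qin sin in auto)
  define Dx where "Dx j = a * (per n (x t) (j - 1) - 2 * x t j + per n (x t) (j + 1))
            + f (x t j) - b * y t j + p * fb n (x t) j" for j
  define Dy where "Dy j = c * x t j - \<delta> * y t j" for j
  have dx: "((\<lambda>s. x s j) has_real_derivative Dx j) (at t)" if "j \<in> {1..n}" for j
    using assms(14,15) that unfolding FHN_solution_def Dx_def by blast
  have dy: "((\<lambda>s. y s j) has_real_derivative Dy j) (at t)" if "j \<in> {1..n}" for j
    using assms(14,15) that unfolding FHN_solution_def Dy_def by blast
  define F where "F s = (\<Sum>i=1..n. (x s i - x s (q i))^2 + (y s i - y s (q i))^2)" for s
  have Feq: "(\<lambda>s. \<Sum>i=1..n. \<bar>x s i - per n (x s) (i - 1)\<bar>^2 + \<bar>y s i - per n (y s) (i - 1)\<bar>^2) = F"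
    unfolding F_def
    apply (intro ext sum.cong refl)
    subgoal for s i using perm1[of i "x s"] perm1[of i "y s"] by simp
    done
  define V where "V i = x t i - x t (q i)" for i
  define W where "W i = y t i - y t (q i)" for i
  define F' where "F' = (\<Sum>i=1..n. 2 * V i * (Dx i - Dx (q i)) + 2 * W i * (Dy i - Dy (q i)))"
  have HD: "(F has_real_derivative F') (at t)"
    unfolding F_def F'_def
  proof (rule DERIV_sum)
    fix i assume i: "i \<in> {1..n}"
    show "((\<lambda>s. (x s i - x s (q i))\<^sup>2 + (y s i - y s (q i))\<^sup>2) has_real_derivative
      2 * V i * (Dx i - Dx (q i)) + 2 * W i * (Dy i - Dy (q i))) (at t)"
      by (rule derivative_eq_intros dx dy i qin[OF i] refl)+ (simp add: V_def W_def algebra_simps)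
  qed
  have "F differentiable (at t)" using HD real_differentiable_def by blast
  moreover have dF: "deriv F t = F'" using HD by (rule DERIV_imp_deriv)
  define L where "L i = V (sc i) - 2 * V i + V (q i)" for i
  define fd where "fd i = f (x t i) - f (x t (q i))" for i
  define ub where "ub i = fb n (x t) i - fb n (x t) (q i)" for i
  have Dxd: "Dx i - Dx (q i) = a * L i + fd i - b * W i + p * ub i" if i: "i \<in> {1..n}" for i
    unfolding Dx_def L_def fd_def ub_def V_def W_def
    using perm1[OF i, of "x t"] perp1[OF i, of "x t"] perm1[OF qin[OF i], of "x t"]
      perp1[OF qin[OF i], of "x t"] sq[OF i] qs[OF i] by (simp add: algebra_simps)
  have Dyd: "Dy i - Dy (q i) = c * V i - \<delta> * W i" for i
    unfolding Dy_def V_def W_def by (simp add: algebra_simps)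
  have F'eq: "F' = 2 * a * (\<Sum>i=1..n. V i * L i) + 2 * (\<Sum>i=1..n. V i * fd i)
     + 2 * (\<Sum>i=1..n. (c - b) * (V i * W i)) - 2 * \<delta> * (\<Sum>i=1..n. (W i)^2)
     + 2 * p * (\<Sum>i=1..n. V i * ub i)"
  proof -
    have "F' = (\<Sum>i=1..n. 2 * a * (V i * L i) + 2 * (V i * fd i) + 2 * ((c - b) * (V i * W i))
       - 2 * \<delta> * (W i)^2 + 2 * p * (V i * ub i))"
      unfolding F'_def
      by (intro sum.cong refl) (simp add: Dxd Dyd algebra_simps power2_eq_square)
    then show ?thesis by (simp add: sum.distrib sum_subtractf sum_distrib_left)
  qed
  have SV: "(\<Sum>i=1..n. (V (g i))^2) = (\<Sum>i=1..n. (V i)^2)" if "bij_betw g {1..n} {1..n}" for g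
    using sum.reindex_bij_betw[OF that, of "\<lambda>i. (V i)^2"] .
  have SL: "(\<Sum>i=1..n. V i * L i) \<le> 0"
  proof -
    have "(\<Sum>i=1..n. V i * L i) \<le> (\<Sum>i=1..n. ((V i)^2 + (V (sc i))^2)/2 - 2 * (V i)^2 + ((V i)^2 + (V (q i))^2)/2)"
      unfolding L_def
    proof (rule sum_mono)
      fix i
      have "0 \<le> (V i - V (sc i))^2" "0 \<le> (V i - V (q i))^2" by simp_all
      moreover have "(V i - V (sc i))^2 = (V i)^2 - 2 * (V i * V (sc i)) + (V (sc i))^2"
        "(V i - V (q i))^2 = (V i)^2 - 2 * (V i * V (q i)) + (V (q i))^2"
        by (simp_all add: power2_diff mult.assoc)
      moreover have "V i * (V (sc i) - 2 * V i + V (q i)) = V i * V (sc i) - 2 * (V i)^2 + V i * V (q i)"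
        by (simp add: power2_eq_square algebra_simps)
      ultimately show "V i * (V (sc i) - 2 * V i + V (q i)) \<le> ((V i)^2 + (V (sc i))^2)/2 - 2 * (V i)^2 + ((V i)^2 + (V (q i))^2)/2"
        by argo
    qed
    also have "\<dots> = 0"
      using SV[OF bs] SV[OF bq]
      by (simp add: sum.distrib sum_subtractf sum_divide_distrib[symmetric] sum_distrib_left[symmetric])
    finally show ?thesis .
  qed
  have SF: "(\<Sum>i=1..n. V i * fd i) \<le> \<gamma> * (\<Sum>i=1..n. (V i)^2)"
    unfolding sum_distrib_left V_def fd_def
    by (rule sum_mono) (rule f_lip[OF assms(10,13)])
  have SC: "(\<Sum>i=1..n. (c - b) * (V i * W i)) \<le> \<bar>c - b\<bar> * (\<Sum>i=1..n. (V i)^2 + (W i)^2)"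
    unfolding sum_distrib_left
  proof (rule sum_mono)
    fix i
    have "(c - b) * (V i * W i) \<le> \<bar>c - b\<bar> * \<bar>V i * W i\<bar>"
      by (metis abs_ge_self abs_mult)
    also have "\<dots> \<le> \<bar>c - b\<bar> * ((V i)^2 + (W i)^2)"
    proof (rule mult_left_mono)
      have "0 \<le> (\<bar>V i\<bar> - \<bar>W i\<bar>)^2" "0 \<le> \<bar>V i\<bar> * \<bar>W i\<bar>" by simp_all
      moreover have "(\<bar>V i\<bar> - \<bar>W i\<bar>)^2 = (V i)^2 - 2 * (\<bar>V i\<bar> * \<bar>W i\<bar>) + (W i)^2"
        by (simp add: power2_diff mult.assoc)
      moreover have "\<bar>V i * W i\<bar> = \<bar>V i\<bar> * \<bar>W i\<bar>" by (simp add: abs_mult)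
      ultimately show "\<bar>V i * W i\<bar> \<le> (V i)^2 + (W i)^2" by linarith
    qed simp
    finally show "(c - b) * (V i * W i) \<le> \<bar>c - b\<bar> * ((V i)^2 + (W i)^2)" .
  qed
  have SU: "(\<Sum>i=1..n. V i * ub i) = V 1 * (- 2 * V 1 + V 2 + V n)"
  proof -
    have "(\<Sum>i=1..n. V i * ub i) = (\<Sum>i\<in>{1,2,n}. V i * ub i)"
    proof (rule sum.mono_neutral_right)
      show "\<forall>i\<in>{1..n} - {1, 2, n}. V i * ub i = 0"
      proof
        fix i assume "i \<in> {1..n} - {1, 2, n}"
        then have "3 \<le> i" "i < n" by auto
        then show "V i * ub i = 0" using n4 by (auto simp add: ub_def fb_def q_def)
      qed
    qed (use n4 in auto)
    also have "\<dots> = V 1 * (- 2 * V 1 + V 2 + V n)"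
      using n4 by (auto simp add: ub_def fb_def q_def V_def algebra_simps)
    finally show ?thesis .
  qed
  have key: "2 * p * (V 1 * (- 2 * V 1 + V 2 + V n)) + 4 * p * (x t n - x t 1)^2 \<le> 2 * p * (x t (n - 1) - x t 2)^2"
  proof -
    have e: "V 1 * (- 2 * V 1 + V 2 + V n) + 2 * (x t n - x t 1)^2 = (x t 1 - x t n) * (x t 2 - x t (n - 1)) - (x t 1 - x t n)^2"
      using n4 by (simp add: V_def q_def power2_eq_square algebra_simps)
    have "(x t 1 - x t n) * (x t 2 - x t (n - 1)) - (x t 1 - x t n)^2 \<le> (x t (n - 1) - x t 2)^2"
      using young_aux[of "x t 1 - x t n" "x t 2 - x t (n - 1)"]
      using power2_commute[of "x t 2" "x t (n - 1)"] by linarith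
    then have "V 1 * (- 2 * V 1 + V 2 + V n) + 2 * (x t n - x t 1)^2 \<le> (x t (n - 1) - x t 2)^2"
      using e by linarith
    from mult_left_mono[OF this, of "2 * p"] assms(6) show ?thesis
      by (simp add: algebra_simps)
  qed
  have S1: "(\<Sum>i=1..n. \<bar>x t i - per n (x t) (i - 1)\<bar>^2 + \<bar>y t i - per n (y t) (i - 1)\<bar>^2)
      = (\<Sum>i=1..n. (V i)^2 + (W i)^2)"
    apply (intro sum.cong refl)
    subgoal for i using perm1[of i "x t"] perm1[of i "y t"] by (simp add: V_def W_def)
    done
  have S2: "(\<Sum>i=1..n. (\<delta> + \<gamma>) * \<bar>x t i - per n (x t) (i - 1)\<bar>^2
                 + \<bar>c - b\<bar> * (\<bar>x t i - per n (x t) (i - 1)\<bar>^2 + \<bar>y t i - per n (y t) (i - 1)\<bar>^2))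
      = (\<delta> + \<gamma>) * (\<Sum>i=1..n. (V i)^2) + \<bar>c - b\<bar> * (\<Sum>i=1..n. (V i)^2 + (W i)^2)"
    unfolding sum_distrib_left sum.distrib[symmetric]
    apply (intro sum.cong refl)
    subgoal for i using perm1[of i "x t"] perm1[of i "y t"] by (simp add: V_def W_def)
    done
  have S3: "(\<Sum>i=1..n. (V i)^2 + (W i)^2) = (\<Sum>i=1..n. (V i)^2) + (\<Sum>i=1..n. (W i)^2)"
    by (simp add: sum.distrib)
  have "deriv F t + 2 * \<delta> * (\<Sum>i=1..n. (V i)^2 + (W i)^2) + 4 * p * (x t n - x t 1)^2
     \<le> 2 * ((\<delta> + \<gamma>) * (\<Sum>i=1..n. (V i)^2) + \<bar>c - b\<bar> * (\<Sum>i=1..n. (V i)^2 + (W i)^2))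
       + 2 * p * (x t (n - 1) - x t 2)^2"
  proof -
    have "a * (\<Sum>i=1..n. V i * L i) \<le> 0" using SL assms(2) by (simp add: mult_nonneg_nonpos)
    then show ?thesis unfolding dF F'eq SU by (rule final_alg[OF _ SF SC key S3])
  qed
  ultimately show ?thesis unfolding Feq S1 S2 by simp
qed

end
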